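(* Let $k\ge2$, $\theta\in\mathbb{R}\setminus\mathbb{Q}$, $p_1,\ldots,p_k\in\mathbb{Z}\setminus\{0\}$ with $\sum_{j=1}^kp_j=0$, and $\xi_1,\ldots,\xi_{k-1}\in\mathbb{Q}\cap[0,1)$ with $\{\sum_{j=1}^{k-1}\xi_j\}\in(0,1)\setminus\{1/2\}$. Consider System A: $\hat\theta_j=p_j\theta+\xi_j$ ($1\le j\le k-1$), $\hat\theta_k=p_k\theta$; and System B: $\hat\theta_j=p_j\theta+\xi_j$ ($1\le j\le k-1$), $\hat\theta_{k,l}=\mathrm{sgn}(p_k)\theta+\frac{l}{|p_k|}$ ($0\le l\le|p_k|-1$). Then Systems A and B are equivalent, i.e. they have the same effective difference number.
   Context: For a system $\hat\theta_i=q_i\theta+\zeta_i$, $i\in I$ ($I$ finite), with $\theta$ irrational, $q_i\in\mathbb{Z}\setminus\{0\}$, $\zeta_i\in\mathbb{Q}\cap[0,1)$, and for $\eta\in\mathbb{Q}$, set $\eta(\zeta_i)=\{\zeta_i-q_i\eta\}$ (fractional part), $k_0^+(\eta)=\#\{i:\eta(\zeta_i)=0,q_i>0\}$, $k_0^-(\eta)=\#\{i:\eta(\zeta_i)=0,q_i<0\}$. The absolute difference number for $\eta$ is $|k_0^+(\eta)-k_0^-(\eta)|$, and the effective difference number of the system is $\max\{|k_0^+(\eta)-k_0^-(\eta)|:\eta\in\mathbb{Q}\}$. Two such systems are called equivalent if their effective difference numbers coincide. In System A the $k$-th equation has $\zeta=0$. $\mathrm{sgn}(a)=\pm1$ according as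 $\pm a>0$. *)

theory Defs
  imports Complex_Main
begin

text \<open>A system  theta_i = q_i theta + zeta_i  (i in a finite index set) is represented by the
  list of its coefficient pairs (q_i, zeta_i), with multiplicity.  The irrational theta
  does not enter the difference numbers.\<close>

type_synonym system = "(int \<times> rat) list"

definition eta_shift :: "rat \<Rightarrow> int \<Rightarrow> rat \<Rightarrow> rat" where
  "eta_shift \<eta> q \<zeta> = frac (\<zeta> - of_int q * \<eta>)"

definition k0_plus :: "system \<Rightarrow> rat \<Rightarrow> nat" where
  "k0_plus S \<eta> = length (filter (\<lambda>(q, \<zeta>). eta_shift \<eta> q \<zeta> = 0 \<and> q > 0) S)"

definition k0_minus :: "system \<Rightarrow> rat \<Rightarrow> nat" where
  "k0_minus S \<eta> = length (filter (\<lambda>(q, \<zeta>). eta_shift \<eta> q \<zeta> = 0 \<and> q < 0) S)"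

definition abs_diff_number :: "system \<Rightarrow> rat \<Rightarrow> int" where
  "abs_diff_number S \<eta> = \<bar>int (k0_plus S \<eta>) - int (k0_minus S \<eta>)\<bar>"

definition eff_diff_number :: "system \<Rightarrow> int" where
  "eff_diff_number S = Max (range (abs_diff_number S))"

definition equivalent_systems :: "system \<Rightarrow> system \<Rightarrow> bool" where
  "equivalent_systems S T \<longleftrightarrow> eff_diff_number S = eff_diff_number T"

definition systemA :: "nat \<Rightarrow> (nat \<Rightarrow> int) \<Rightarrow> (nat \<Rightarrow> rat) \<Rightarrow> system" where
  "systemA k p \<xi> = map (\<lambda>j. (p j, \<xi> j)) [1..<k] @ [(p k, 0)]"

definition systemB :: "nat \<Rightarrow> (nat \<Rightarrow> int) \<Rightarrow> (nat \<Rightarrow> rat) \<Rightarrow> system" where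
  "systemB k p \<xi> = map (\<lambda>j. (p j, \<xi> j)) [1..<k] @
     map (\<lambda>l. (sgn (p k), of_nat l / of_int \<bar>p k\<bar>)) [0..<nat \<bar>p k\<bar>]"

end

theory Submission
  imports Defs
begin

lemma int_div_Ints_iff:
  fixes a n :: int assumes "n > 0"
  shows "(of_int a / of_int n :: rat) \<in> \<int> \<longleftrightarrow> n dvd a"
proof
  assume "(of_int a / of_int n :: rat) \<in> \<int>"
  then obtain m where "(of_int a / of_int n :: rat) = of_int m" by (auto elim: Ints_cases)
  then have "(of_int a :: rat) = of_int (n * m)" using assms by (simp add: field_simps)
  then have "a = n * m" by (simp only: of_int_eq_iff)
  then show "n dvd a" by simp
next
  assume "n dvd a"
  then obtain m where "a = n * m" by auto
  then show "(of_int a / of_int n :: rat) \<in> \<int>" using assms by simp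
qed

lemma key:
  fixes q :: int and \<eta> :: rat assumes q: "q \<noteq> 0"
  shows "length (filter (\<lambda>l. frac (of_nat l / of_int \<bar>q\<bar> - of_int (sgn q) * \<eta>) = 0) [0..<nat \<bar>q\<bar>])
     = (if frac (0 - of_int q * \<eta>) = 0 then 1 else 0)"
proof -
  define n where "n = \<bar>q\<bar>"
  define s where "s = sgn q"
  have n0: "n > 0" using q by (simp add: n_def)
  have qsn: "q = s * n" by (simp add: s_def n_def mult_sgn_abs)
  have ss: "s * s = 1" using q by (simp add: s_def sgn_if)
  have L: "length (filter P [0..<nat n]) = card {l. l < nat n \<and> P l}" for P
    by (simp add: length_filter_conv_card cong: conj_cong)
  have sn: "of_int n * (of_int s * \<eta>) = of_int q * \<eta>"
    by (simp add: qsn)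
  show ?thesis
  proof (cases "of_int q * \<eta> \<in> \<int>")
    case True
    then obtain t where t: "of_int q * \<eta> = of_int t" by (auto elim: Ints_cases)
    have "of_int n * (of_int s * \<eta>) = (of_int t :: rat)" using sn t by simp
    then have seta: "of_int s * \<eta> = of_int t / of_int n" using n0 by (simp add: eq_divide_eq mult.commute)
    have "{l. l < nat n \<and> (of_nat l / of_int n - of_int s * \<eta> :: rat) \<in> \<int>} = {nat (t mod n)}"
    proof (rule set_eqI, rule iffI)
      fix l assume "l \<in> {l. l < nat n \<and> (of_nat l / of_int n - of_int s * \<eta> :: rat) \<in> \<int>}"
      then have l: "l < nat n" and "(of_nat l / of_int n - of_int s * \<eta> :: rat) \<in> \<int>" by auto
      then have "(of_int (int l - t) / of_int n :: rat) \<in> \<int>" using seta n0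
        by (simp add: diff_divide_distrib)
      then have "n dvd int l - t" using int_div_Ints_iff n0 by blast
      then have "int l mod n = t mod n" by (metis mod_eq_dvd_iff)
      moreover have "int l mod n = int l" using l n0 by simp
      ultimately show "l \<in> {nat (t mod n)}" by simp
    next
      fix l assume "l \<in> {nat (t mod n)}"
      then have l: "int l = t mod n" using n0 by simp
      have "l < nat n" using l n0 by (metis nat_int pos_mod_bound zless_nat_eq_int_zless)
      moreover have "n dvd int l - t" using l by (simp add: mod_eq_dvd_iff[symmetric])
      then have "(of_int (int l - t) / of_int n :: rat) \<in> \<int>" using int_div_Ints_iff n0 by blast
      then have "(of_nat l / of_int n - of_int s * \<eta> :: rat) \<in> \<int>" using seta n0
        by (simp add: diff_divide_distrib)
      ultimately show "l \<in> {l. l < nat n \<and> (of_nat l / of_int n - of_int s * \<eta> :: rat) \<in> \<int>}" by simp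
    qed
    then show ?thesis using True L by (simp add: n_def[symmetric] s_def[symmetric])
  next
    case False
    have "{l. l < nat n \<and> (of_nat l / of_int n - of_int s * \<eta> :: rat) \<in> \<int>} = {}"
    proof (rule ccontr)
      assume "\<not> ?thesis"
      then obtain l where "(of_nat l / of_int n - of_int s * \<eta> :: rat) \<in> \<int>" by auto
      then obtain m where m: "(of_nat l / of_int n - of_int s * \<eta> :: rat) = of_int m" by (auto elim: Ints_cases)
      then have "of_int s * \<eta> = of_nat l / of_int n - of_int m" by simp
      then have "of_int q * \<eta> = (of_int n * (of_nat l / of_int n - of_int m) :: rat)" using sn by metis
      also have "\<dots> = of_int (int l - n * m)" using n0 by (simp add: field_simps)
      finally show False using False by auto
    qed
    then show ?thesis using False L by (simp add: n_def[symmetric] s_def[symmetric])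
  qed
qed

lemma tail_plus:
  fixes q :: int assumes q: "q \<noteq> 0"
  shows "length (filter (\<lambda>(q', \<zeta>). eta_shift \<eta> q' \<zeta> = 0 \<and> q' > 0)
            (map (\<lambda>l. (sgn q, of_nat l / of_int \<bar>q\<bar>)) [0..<nat \<bar>q\<bar>]))
       = length (filter (\<lambda>(q', \<zeta>). eta_shift \<eta> q' \<zeta> = 0 \<and> q' > 0) [(q, 0)])"
proof (cases "q > 0")
  case True
  then show ?thesis using key[OF q, of \<eta>] by (simp add: eta_shift_def o_def del: frac_eq_0_iff)
next
  case False
  then have "sgn q \<le> 0" by (simp add: sgn_if)
  then show ?thesis using False by (simp add: filter_empty_conv)
qed

lemma tail_minus:
  fixes q :: int assumes q: "q \<noteq> 0"
  shows "length (filter (\<lambda>(q', \<zeta>). eta_shift \<eta> q' \<zeta> = 0 \<and> q' < 0)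
            (map (\<lambda>l. (sgn q, of_nat l / of_int \<bar>q\<bar>)) [0..<nat \<bar>q\<bar>]))
       = length (filter (\<lambda>(q', \<zeta>). eta_shift \<eta> q' \<zeta> = 0 \<and> q' < 0) [(q, 0)])"
proof (cases "q < 0")
  case True
  then show ?thesis using key[OF q, of \<eta>] by (simp add: eta_shift_def o_def del: frac_eq_0_iff)
next
  case False
  then have "sgn q \<ge> 0" by (simp add: sgn_if)
  then show ?thesis using False by (simp add: filter_empty_conv)
qed

theorem lemma4p2:
  fixes k :: nat and \<theta> :: real and p :: "nat \<Rightarrow> int" and \<xi> :: "nat \<Rightarrow> rat"
  assumes "k \<ge> 2"
    and "\<theta> \<notin> \<rat>"
    and "\<forall>j\<in>{1..k}. p j \<noteq> 0"
    and "(\<Sum>j=1..k. p j) = 0"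
    and "\<forall>j\<in>{1..k-1}. 0 \<le> \<xi> j \<and> \<xi> j < 1"
    and "frac (\<Sum>j=1..k-1. \<xi> j) \<in> {0<..<1} - {1/2}"
  shows "equivalent_systems (systemA k p \<xi>) (systemB k p \<xi>)"
proof -
  have pk: "p k \<noteq> 0" using assms(1,3) by auto
  have "abs_diff_number (systemA k p \<xi>) = abs_diff_number (systemB k p \<xi>)"
  proof
    fix \<eta>
    have "k0_plus (systemA k p \<xi>) \<eta> = k0_plus (systemB k p \<xi>) \<eta>"
      unfolding k0_plus_def systemA_def systemB_def filter_append length_append
      using tail_plus[OF pk, of \<eta>] by simp
    moreover have "k0_minus (systemA k p \<xi>) \<eta> = k0_minus (systemB k p \<xi>) \<eta>"
      unfolding k0_minus_def systemA_def systemB_def filter_append length_append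
      using tail_minus[OF pk, of \<eta>] by simp
    ultimately show "abs_diff_number (systemA k p \<xi>) \<eta> = abs_diff_number (systemB k p \<xi>) \<eta>"
      by (simp add: abs_diff_number_def)
  qed
  then show ?thesis by (simp add: equivalent_systems_def eff_diff_number_def)
qed

end
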